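(* Let $X_1,\ldots,X_m$ be independent $\mathbb{R}^d$-valued random variables, each with an absolutely continuous distribution and finite $h(X_j)$, and let $a_1,\ldots,a_m\in\mathbb{R}$ be not all zero, with $h(\sum_j a_jX_j)$ finite. For $N>0$ let $X_1^{(N)},\ldots,X_m^{(N)}$ be independent with $X_j^{(N)}$ distributed as $X_j$ conditioned on $X_j\in[-N,N]^d$. Then $$\lim_{N\to\infty}h\Big(\sum_{j=1}^m a_jX_j^{(N)}\Big)=h\Big(\sum_{j=1}^m a_jX_j\Big).$$
   Context: $h$ denotes differential entropy w.r.t. Lebesgue measure. The conditional law of $X$ given $X\in[-N,N]^d$ has density $f_X(x)\mathbf 1\{x\in[-N,N]^d\}/P(X\in[-N,N]^d)$. *)

theory Defs
  imports "HOL-Probability.Probability"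
begin

definition cube :: "real \<Rightarrow> (real ^ 'd) set" where
  "cube N = {x. \<forall>i. \<bar>x $ i\<bar> \<le> N}"

end

theory Submission imports Defs begin


lemma dens_le:
  fixes f g :: "'a \<Rightarrow> ennreal"
  assumes [measurable]: "f \<in> borel_measurable M" "g \<in> borel_measurable M"
    and fin: "(\<integral>\<^sup>+x. g x \<partial>M) \<noteq> \<infinity>"
    and le: "\<And>A. A \<in> sets M \<Longrightarrow> emeasure (density M f) A \<le> emeasure (density M g) A"
  shows "AE x in M. f x \<le> g x"
proof (rule ccontr)
  assume nAE: "\<not> (AE x in M. f x \<le> g x)"
  define A where "A = {x\<in>space M. g x < f x}"
  have A[measurable]: "A \<in> sets M" unfolding A_def by measurable
  have "(\<integral>\<^sup>+x. g x * indicator A x \<partial>M) \<le> (\<integral>\<^sup>+x. g x \<partial>M)"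
    by (intro nn_integral_mono) (auto split: split_indicator)
  then have fin': "(\<integral>\<^sup>+x. g x * indicator A x \<partial>M) \<noteq> \<infinity>" using fin by (auto simp: top_unique)
  have o1: "AE x in M. g x * indicator A x \<le> f x * indicator A x"
    by (auto simp: A_def split: split_indicator)
  have o2: "\<not> (AE x in M. f x * indicator A x \<le> g x * indicator A x)"
  proof
    assume "AE x in M. f x * indicator A x \<le> g x * indicator A x"
    from this AE_space have "AE x in M. f x \<le> g x"
    proof eventually_elim
      fix x assume x: "f x * indicator A x \<le> g x * indicator A x" "x \<in> space M"
      show "f x \<le> g x"
      proof (cases "x \<in> A")
        case True then show ?thesis using x by simp
      next
        case False then show ?thesis using x by (simp add: A_def not_less)
      qed
    qed
    with nAE show False by simp
  qed
  have "(\<integral>\<^sup>+x. g x * indicator A x \<partial>M) < (\<integral>\<^sup>+x. f x * indicator A x \<partial>M)"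
    by (rule nn_integral_less[OF _ _ fin' o1 o2]) auto
  moreover have "(\<integral>\<^sup>+x. f x * indicator A x \<partial>M) \<le> (\<integral>\<^sup>+x. g x * indicator A x \<partial>M)"
    using le[OF A] by (simp add: emeasure_density)
  ultimately show False by simp
qed

lemma tlnt_aux:
  fixes t u :: real
  assumes "0 \<le> t" "t \<le> u"
  shows "\<bar>t * ln t\<bar> \<le> \<bar>u * ln u\<bar> + u"
proof (cases "t = 0")
  case True then show ?thesis using assms by simp
next
  case False
  then have t0: "0 < t" using assms by simp
  have u0: "0 < u" using assms t0 by simp
  show ?thesis
  proof (cases "1 \<le> t")
    case True
    have "0 \<le> ln t" using True by simp
    moreover have "ln t \<le> ln u" using assms t0 by simp
    ultimately have "t * ln t \<le> u * ln u" using assms t0 by (intro mult_mono) auto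
    moreover have "0 \<le> t * ln t" using True by simp
    ultimately show ?thesis using u0 by simp
  next
    case False
    then have lnt: "ln t < 0" using t0 by simp
    have k: "ln (1/t) \<le> 1/t - 1" using t0 by (intro ln_le_minus_one) simp
    have "- ln t \<le> 1/t - 1" using k t0 by (simp add: ln_div)
    then have "- (t * ln t) \<le> 1 - t" using t0 by (simp add: field_simps)
    show ?thesis
    proof (cases "u \<le> 1")
      case True
      have lnu: "ln u \<le> 0" using True u0 by simp
      have k2: "ln (u/t) \<le> u/t - 1" using t0 u0 by (intro ln_le_minus_one) simp
      have "ln u - ln t \<le> u/t - 1" using k2 t0 u0 by (simp add: ln_div)
      then have a: "t * (ln u - ln t) \<le> u - t" using t0 by (simp add: field_simps)
      have b: "- (t * ln u) \<le> - (u * ln u)" using lnu assms by (simp add: mult_right_mono_neg)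
      have "- (t * ln t) \<le> - (u * ln u) + u" using a b t0 by (simp add: algebra_simps)
      moreover have "\<bar>t*ln t\<bar> = -(t*ln t)" using mult_pos_neg[OF t0 lnt] by simp
      moreover have "\<bar>u*ln u\<bar> = -(u*ln u)" using lnu u0 by (simp add: mult_nonneg_nonpos)
      ultimately show ?thesis by linarith
    next
      case False
      have uu: "0 \<le> u * ln u" using False by simp
      have "\<bar>t*ln t\<bar> = -(t*ln t)" using mult_pos_neg[OF t0 lnt] by simp
      moreover have "\<bar>u*ln u\<bar> = u*ln u" using uu by simp
      ultimately show ?thesis using \<open>- (t * ln t) \<le> 1 - t\<close> uu t0 False by linarith
    qed
  qed
qed

lemma tlnt_bound:
  fixes t f :: real
  assumes "0 \<le> t" "t \<le> 2 * f"
  shows "\<bar>t * ln t\<bar> \<le> 2 * \<bar>f * ln f\<bar> + 4 * f"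
proof (cases "f = 0")
  case True then show ?thesis using assms by simp
next
  case False
  then have f0: "0 < f" using assms by simp
  have "\<bar>t * ln t\<bar> \<le> \<bar>(2*f) * ln (2*f)\<bar> + 2*f" by (rule tlnt_aux[OF assms])
  also have "ln (2*f) = ln 2 + ln f" using f0 by (simp add: ln_mult)
  also have "\<bar>(2*f) * (ln 2 + ln f)\<bar> \<le> 2*f*ln 2 + 2 * \<bar>f * ln f\<bar>"
  proof -
    have e: "(2*f)*(ln 2 + ln f) = 2*f*ln 2 + 2*(f*ln f)" by (simp add: algebra_simps)
    have "\<bar>2*f*ln 2 + 2*(f*ln f)\<bar> \<le> \<bar>2*f*ln 2\<bar> + \<bar>2*(f*ln f)\<bar>" by (rule abs_triangle_ineq)
    moreover have "\<bar>2*f*ln 2\<bar> = 2*f*ln 2" using f0 by simp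
    moreover have "\<bar>2*(f*ln f)\<bar> = 2*\<bar>f*ln f\<bar>" by (simp add: abs_mult)
    ultimately show ?thesis unfolding e by linarith
  qed
  also have "ln (2::real) \<le> 1" using ln_le_minus_one[of 2] by simp
  then have "2*f*ln 2 \<le> 2*f" using f0 by simp
  ultimately show ?thesis by linarith
qed



lemma law_restrict:
  fixes M :: "'w measure" and X :: "nat \<Rightarrow> 'w \<Rightarrow> real ^ 'd" and a :: "nat \<Rightarrow> real"
    and M' :: "'v measure" and Y :: "nat \<Rightarrow> 'v \<Rightarrow> real ^ 'd" and C :: "(real ^ 'd) set"
  assumes P: "prob_space M" and P': "prob_space M'" and m: "0 < m"
    and indX: "prob_space.indep_vars M (\<lambda>_. borel) X {..<m}"
    and indY: "prob_space.indep_vars M' (\<lambda>_. borel) Y {..<m}"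
    and C[measurable]: "C \<in> sets borel"
    and pos: "\<forall>j<m. measure M {\<omega> \<in> space M. X j \<omega> \<in> C} > 0"
    and law: "\<forall>j<m. \<forall>A\<in>sets borel.
           measure M' {\<omega> \<in> space M'. Y j \<omega> \<in> A} =
           measure M {\<omega> \<in> space M. X j \<omega> \<in> A \<inter> C} / measure M {\<omega> \<in> space M. X j \<omega> \<in> C}"
  shows "distr M' lborel (\<lambda>\<omega>. \<Sum>j<m. a j *\<^sub>R Y j \<omega>) =
     distr (density M (\<lambda>\<omega>. indicator {\<omega>\<in>space M. \<forall>j<m. X j \<omega> \<in> C} \<omega> *
        ennreal (1 / (\<Prod>j<m. measure M {\<omega> \<in> space M. X j \<omega> \<in> C})))) lborel (\<lambda>\<omega>. \<Sum>j<m. a j *\<^sub>R X j \<omega>)"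
proof -
  interpret M: prob_space M by (rule P)
  interpret M': prob_space M' by (rule P')
  define I where "I = {..<m}"
  have I: "finite I" "I \<noteq> {}" using m by (auto simp: I_def)
  define pj where "pj j = measure M {\<omega> \<in> space M. X j \<omega> \<in> C}" for j
  define pp where "pp = (\<Prod>j<m. pj j)"
  have pp: "0 < pp" unfolding pp_def using pos by (intro prod_pos) (auto simp: pj_def)
  define c where "c = ennreal (1 / pp)"
  have rvX[measurable]: "X j \<in> M \<rightarrow>\<^sub>M borel" if "j \<in> I" for j
    using indX that unfolding M.indep_vars_def I_def by auto
  have rvY[measurable]: "Y j \<in> M' \<rightarrow>\<^sub>M borel" if "j \<in> I" for j
    using indY that unfolding M'.indep_vars_def I_def by auto
  define r where "r j = (if j \<in> I then j else 0)" for j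
  have rI: "r j \<in> I" for j using m by (auto simp: r_def I_def)
  define LX where "LX j = distr M borel (X (r j))" for j
  define LY where "LY j = distr M' borel (Y (r j))" for j
  have LXp: "prob_space (LX j)" for j unfolding LX_def using rI by (intro M.prob_space_distr) auto
  have LYp: "prob_space (LY j)" for j unfolding LY_def using rI by (intro M'.prob_space_distr) auto
  have sLX[simp]: "sets (LX j) = sets borel" for j by (simp add: LX_def)
  have sLY[simp]: "sets (LY j) = sets borel" for j by (simp add: LY_def)
  interpret PX: product_sigma_finite LX
    by (intro product_sigma_finite.intro prob_space_imp_sigma_finite LXp)
  interpret PY: product_sigma_finite LY
    by (intro product_sigma_finite.intro prob_space_imp_sigma_finite LYp)
  define tX where "tX = (\<lambda>\<omega>. \<lambda>i\<in>I. X i \<omega>)"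
  define tY where "tY = (\<lambda>\<omega>. \<lambda>i\<in>I. Y i \<omega>)"
  have tX[measurable]: "tX \<in> M \<rightarrow>\<^sub>M PiM I (\<lambda>_. borel)" unfolding tX_def by measurable
  have tY[measurable]: "tY \<in> M' \<rightarrow>\<^sub>M PiM I (\<lambda>_. borel)" unfolding tY_def by measurable
  have dX: "distr M (PiM I (\<lambda>_. borel)) tX = PiM I LX"
  proof -
    have "distr M (PiM I (\<lambda>_. borel)) tX = PiM I (\<lambda>i. distr M borel (X i))"
      unfolding tX_def using indX I rvX by (subst M.indep_vars_iff_distr_eq_PiM'[symmetric]) (auto simp: I_def)
    also have "\<dots> = PiM I LX" by (intro PiM_cong) (auto simp: LX_def r_def)
    finally show ?thesis .
  qed
  have dY: "distr M' (PiM I (\<lambda>_. borel)) tY = PiM I LY"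
  proof -
    have "distr M' (PiM I (\<lambda>_. borel)) tY = PiM I (\<lambda>i. distr M' borel (Y i))"
      unfolding tY_def using indY I rvY by (subst M'.indep_vars_iff_distr_eq_PiM'[symmetric]) (auto simp: I_def)
    also have "\<dots> = PiM I LY" by (intro PiM_cong) (auto simp: LY_def r_def)
    finally show ?thesis .
  qed
  define CC where "CC = PiE I (\<lambda>_. C)"
  have CC[measurable]: "CC \<in> sets (PiM I (\<lambda>_. borel))" unfolding CC_def using I by (intro sets_PiM_I_finite) auto
  have CCX: "CC \<in> sets (PiM I LX)" using CC by (subst sets_PiM_cong[of I I LX "\<lambda>_. borel"]) auto
  define g where "g y = indicator CC y * c" for y
  have g[measurable]: "g \<in> borel_measurable (PiM I (\<lambda>_. borel))" unfolding g_def by measurable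
  have gX: "g \<in> borel_measurable (PiM I LX)"
    using g by (subst measurable_cong_sets[of _ "PiM I (\<lambda>_. borel)"]) (auto intro!: sets_PiM_cong)
  have dens: "PiM I LY = density (PiM I LX) g"
  proof (rule PY.PiM_eqI[symmetric])
    show "finite I" by fact
    show "sets (density (PiM I LX) g) = sets (PiM I LY)" by (auto intro!: sets_PiM_cong)
    fix A assume A: "\<And>i. i \<in> I \<Longrightarrow> A i \<in> sets (LY i)"
    have AX: "PiE I A \<in> sets (PiM I LX)" using A I by (intro sets_PiM_I_finite) auto
    have "emeasure (density (PiM I LX) g) (PiE I A) = (\<integral>\<^sup>+y. c * indicator (PiE I A \<inter> CC) y \<partial>PiM I LX)"
      using AX gX by (subst emeasure_density) (auto intro!: nn_integral_cong simp: g_def split: split_indicator)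
    also have "\<dots> = c * emeasure (PiM I LX) (PiE I (\<lambda>i. A i \<inter> C))"
      using sets.Int[OF AX CCX] by (subst nn_integral_cmult_indicator) (auto simp: CC_def PiE_Int)
    also have "\<dots> = c * (\<Prod>i\<in>I. emeasure (LX i) (A i \<inter> C))"
      using A I by (subst PX.emeasure_PiM) auto
    also have "\<dots> = (\<Prod>i\<in>I. emeasure (LY i) (A i))"
    proof -
      have eY: "emeasure (LY i) (A i) = ennreal (measure M {\<omega> \<in> space M. X i \<omega> \<in> A i \<inter> C} / pj i)" if i: "i \<in> I" for i
      proof -
        interpret Li: prob_space "LY i" by (rule LYp)
        have "emeasure (LY i) (A i) = ennreal (measure (LY i) (A i))"
          by (simp add: Li.emeasure_eq_measure)
        also have "measure (LY i) (A i) = measure M' {\<omega> \<in> space M'. Y i \<omega> \<in> A i}"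
          using i A[OF i] rI unfolding LY_def r_def by (subst measure_distr) (auto simp: vimage_def Int_def conj_commute)
        also have "\<dots> = measure M {\<omega> \<in> space M. X i \<omega> \<in> A i \<inter> C} / pj i"
          using law A[OF i] i by (auto simp: I_def pj_def)
        finally show ?thesis .
      qed
      have eX: "emeasure (LX i) (A i \<inter> C) = ennreal (measure M {\<omega> \<in> space M. X i \<omega> \<in> A i \<inter> C})" if i: "i \<in> I" for i
      proof -
        interpret Li: prob_space "LX i" by (rule LXp)
        have "emeasure (LX i) (A i \<inter> C) = ennreal (measure (LX i) (A i \<inter> C))"
          by (simp add: Li.emeasure_eq_measure)
        also have "measure (LX i) (A i \<inter> C) = measure M {\<omega> \<in> space M. X i \<omega> \<in> A i \<inter> C}"
          using i A[OF i] rI unfolding LX_def r_def by (subst measure_distr) (auto simp: vimage_def Int_def conj_commute)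
        finally show ?thesis .
      qed
      have pjpos: "0 < pj i" if "i \<in> I" for i using pos that by (auto simp: pj_def I_def)
      have "(\<Prod>i\<in>I. emeasure (LY i) (A i)) = ennreal (\<Prod>i\<in>I. measure M {\<omega> \<in> space M. X i \<omega> \<in> A i \<inter> C} / pj i)"
        using eY pjpos by (simp add: prod_ennreal less_imp_le)
      also have "(\<Prod>i\<in>I. measure M {\<omega> \<in> space M. X i \<omega> \<in> A i \<inter> C} / pj i) =
          (1 / pp) * (\<Prod>i\<in>I. measure M {\<omega> \<in> space M. X i \<omega> \<in> A i \<inter> C})"
        by (simp add: prod_dividef pp_def I_def)
      also have "ennreal \<dots> = c * ennreal (\<Prod>i\<in>I. measure M {\<omega> \<in> space M. X i \<omega> \<in> A i \<inter> C})"
        unfolding c_def using pp by (subst ennreal_mult[symmetric]) (auto simp: prod_nonneg)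
      also have "\<dots> = c * (\<Prod>i\<in>I. emeasure (LX i) (A i \<inter> C))"
        using eX by (simp add: prod_ennreal)
      finally show ?thesis by simp
    qed
    finally show "emeasure (density (PiM I LX) g) (PiE I A) = (\<Prod>i\<in>I. emeasure (LY i) (A i))" .
  qed
  define T where "T y = (\<Sum>j<m. a j *\<^sub>R (y j :: real^'d))" for y
  have T[measurable]: "T \<in> PiM I (\<lambda>_. borel) \<rightarrow>\<^sub>M borel"
    unfolding T_def I_def by measurable
  have TX: "T \<in> PiM I LX \<rightarrow>\<^sub>M borel"
    using T by (subst measurable_cong_sets[of _ "PiM I (\<lambda>_. borel)"]) (auto intro!: sets_PiM_cong)
  define E where "E = {\<omega>\<in>space M. \<forall>j<m. X j \<omega> \<in> C}"
  have "distr M' lborel (\<lambda>\<omega>. \<Sum>j<m. a j *\<^sub>R Y j \<omega>) = distr M' lborel (T \<circ> tY)"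
    by (intro distr_cong) (auto simp: T_def tY_def I_def)
  also have "\<dots> = distr (distr M' (PiM I (\<lambda>_. borel)) tY) lborel T"
    by (subst distr_distr) auto
  also have "\<dots> = distr (density (distr M (PiM I (\<lambda>_. borel)) tX) g) lborel T"
    unfolding dY dens dX ..
  also have "\<dots> = distr (distr (density M (\<lambda>x. g (tX x))) (PiM I (\<lambda>_. borel)) tX) lborel T"
    by (subst density_distr) auto
  also have "\<dots> = distr (density M (\<lambda>x. g (tX x))) lborel (T \<circ> tX)"
    by (subst distr_distr) auto
  also have "\<dots> = distr (density M (\<lambda>\<omega>. indicator E \<omega> * c)) lborel (\<lambda>\<omega>. \<Sum>j<m. a j *\<^sub>R X j \<omega>)"
  proof (intro distr_cong)
    have m1: "(\<lambda>x. g (tX x)) \<in> borel_measurable M" by measurable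
    have eq: "g (tX x) = indicator E x * c" if x: "x \<in> space M" for x
    proof -
      have "tX x \<in> CC \<longleftrightarrow> x \<in> E" using x by (auto simp: tX_def CC_def I_def PiE_iff E_def)
      then show ?thesis unfolding g_def indicator_def by simp
    qed
    have m2: "(\<lambda>\<omega>. indicator E \<omega> * c) \<in> borel_measurable M"
      using m1 measurable_cong[of M "\<lambda>x. g (tX x)" "\<lambda>\<omega>. indicator E \<omega> * c" borel] eq by simp
    show "density M (\<lambda>x. g (tX x)) = density M (\<lambda>\<omega>. indicator E \<omega> * c)"
      by (rule density_cong[OF m1 m2]) (intro AE_I2 eq)
  next
    show "sets lborel = sets lborel" ..
  next
    fix x assume "x \<in> space (density M (\<lambda>x. g (tX x)))"
    then show "(T \<circ> tX) x = (\<Sum>j<m. a j *\<^sub>R X j x)"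
      by (simp add: T_def tX_def I_def)
  qed
  finally show ?thesis by (simp add: E_def c_def pp_def pj_def)
qed



lemma cube_borel[measurable]: "cube N \<in> sets (borel :: (real^'d) measure)"
  unfolding cube_def by measurable

lemma cube_mono: "N \<le> N' \<Longrightarrow> cube N \<subseteq> cube N'"
  unfolding cube_def by (auto intro: order_trans)

theorem mainTheorem6:
  fixes M :: "'w measure" and X :: "nat \<Rightarrow> 'w \<Rightarrow> real ^ 'd"
    and a :: "nat \<Rightarrow> real" and m :: nat
    and M' :: "real \<Rightarrow> 'v measure" and Y :: "real \<Rightarrow> nat \<Rightarrow> 'v \<Rightarrow> real ^ 'd"
  assumes P: "prob_space M"
    and indep: "prob_space.indep_vars M (\<lambda>_. borel) X {..<m}"
    and fin: "\<forall>j<m. \<exists>f. information_space.finite_entropy M (exp 1) lborel (X j) f"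
    and nz: "\<exists>j<m. a j \<noteq> 0"
    and finS: "\<exists>f. information_space.finite_entropy M (exp 1) lborel
                   (\<lambda>\<omega>. \<Sum>j<m. a j *\<^sub>R X j \<omega>) f"
    and Ylaw: "\<forall>N>0. (\<forall>j<m. measure M {\<omega> \<in> space M. X j \<omega> \<in> cube N} > 0) \<longrightarrow>
        prob_space (M' N) \<and>
        prob_space.indep_vars (M' N) (\<lambda>_. borel) (Y N) {..<m} \<and>
        (\<forall>j<m. \<forall>A\<in>sets borel.
           measure (M' N) {\<omega> \<in> space (M' N). Y N j \<omega> \<in> A} =
           measure M {\<omega> \<in> space M. X j \<omega> \<in> A \<inter> cube N}
             / measure M {\<omega> \<in> space M. X j \<omega> \<in> cube N})"
  shows "((\<lambda>N. prob_space.entropy (M' N) (exp 1) lborel (\<lambda>\<omega>. \<Sum>j<m. a j *\<^sub>R Y N j \<omega>))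
           \<longlongrightarrow> prob_space.entropy M (exp 1) lborel (\<lambda>\<omega>. \<Sum>j<m. a j *\<^sub>R X j \<omega>)) at_top"
proof -
  interpret M: prob_space M by (rule P)
  interpret IM: information_space M "exp 1"
    by (simp add: information_space_def information_space_axioms_def P)
  have m: "0 < m" using nz by auto
  have rvX[measurable]: "X j \<in> M \<rightarrow>\<^sub>M borel" if "j \<in> {..<m}" for j
    using indep that unfolding M.indep_vars_def by auto
  define S where "S \<omega> = (\<Sum>j<m. a j *\<^sub>R X j \<omega>)" for \<omega>
  have S[measurable]: "S \<in> M \<rightarrow>\<^sub>M borel" unfolding S_def by measurable
  have Slb[measurable]: "S \<in> M \<rightarrow>\<^sub>M lborel" using S by simp
  obtain f0 where fe: "IM.finite_entropy lborel S f0"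
    using finS unfolding S_def[abs_def] by blast
  have dist: "distributed M lborel S f0" using IM.finite_entropy_distributed[OF fe] .
  have nn: "0 \<le> f0 x" for x using IM.finite_entropy_nn[OF fe] by simp
  have f0m[measurable]: "f0 \<in> borel_measurable lborel" using IM.finite_entropy_measurable[OF fe] by simp
  have intfl: "integrable lborel (\<lambda>x. f0 x * ln (f0 x))"
    using IM.finite_entropy_integrable[OF fe] by (simp add: log_def)
  have lawS: "distr M lborel S = density lborel f0"
    using dist by (rule distributed_distr_eq_density)
  have int0: "integrable lborel f0"
    using distributed_integrable[OF dist, of "\<lambda>_. 1"] nn by simp
  have intf0: "(\<integral>x. f0 x \<partial>lborel) = 1"
    using distributed_integral[OF dist, of "\<lambda>_. 1"] nn M.prob_space by simp
  have H: "M.entropy (exp 1) lborel S = - (\<integral>x. f0 x * ln (f0 x) \<partial>lborel)"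
    using IM.entropy_distr[OF dist] nn by (simp add: log_def)
  have nnf0: "(\<integral>\<^sup>+x. ennreal (f0 x) \<partial>lborel) = 1"
  proof -
    have "(\<integral>\<^sup>+x. ennreal (f0 x) \<partial>lborel) = emeasure (density lborel f0) (space lborel)"
      by (simp add: emeasure_density)
    also have "\<dots> = emeasure (distr M lborel S) (space lborel)" unfolding lawS ..
    also have "\<dots> = 1" by (simp add: emeasure_distr M.emeasure_space_1)
    finally show ?thesis .
  qed

  define E where "E N = {\<omega>\<in>space M. \<forall>j<m. X j \<omega> \<in> cube N}" for N
  have E_eq: "E N = (\<Inter>j\<in>{..<m}. {\<omega>\<in>space M. X j \<omega> \<in> cube N})" for N
    using m by (auto simp: E_def)
  have E[measurable]: "E N \<in> sets M" for N
    unfolding E_eq using m by (intro sets.finite_INT) auto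
  have E_mono: "N \<le> N' \<Longrightarrow> E N \<subseteq> E N'" for N N'
    using cube_mono by (auto simp: E_def)
  define pE where "pE N = measure M (E N)" for N
  define K where "K N = distr (density M (indicator (E N))) lborel S" for N
  have sK[simp]: "sets (K N) = sets lborel" for N by (simp add: K_def)
  have eK: "emeasure (K N) A = emeasure M (S -` A \<inter> space M \<inter> E N)" if A: "A \<in> sets lborel" for N A
  proof -
    have "emeasure (K N) A = (\<integral>\<^sup>+\<omega>. indicator (E N) \<omega> * indicator (S -` A \<inter> space M) \<omega> \<partial>M)"
      unfolding K_def using A by (simp add: emeasure_distr emeasure_density)
    also have "\<dots> = (\<integral>\<^sup>+\<omega>. indicator (S -` A \<inter> space M \<inter> E N) \<omega> \<partial>M)"
      by (intro nn_integral_cong) (auto split: split_indicator)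
    also have "\<dots> = emeasure M (S -` A \<inter> space M \<inter> E N)"
      by (intro nn_integral_indicator sets.Int measurable_sets[OF Slb A] E)
    finally show ?thesis .
  qed
  have eS: "emeasure (density lborel f0) A = emeasure M (S -` A \<inter> space M)" if A: "A \<in> sets lborel" for A
    unfolding lawS[symmetric] using A by (simp add: emeasure_distr)
  have K_le: "emeasure (K N) A \<le> emeasure (density lborel f0) A" if A: "A \<in> sets lborel" for N A
    unfolding eK[OF A] eS[OF A] by (intro emeasure_mono measurable_sets[OF Slb A]) auto
  have K_mono: "emeasure (K N) A \<le> emeasure (K N') A" if A: "A \<in> sets lborel" and NN: "N \<le> N'" for N N' A
    unfolding eK[OF A] eK[OF A] using E_mono[OF NN] by (intro emeasure_mono sets.Int[OF measurable_sets[OF Slb A] E]) auto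
  have K_ac: "absolutely_continuous lborel (K N)" for N
    unfolding absolutely_continuous_def
  proof
    fix A :: "(real^'d) set" assume A: "A \<in> null_sets lborel"
    have ac: "absolutely_continuous lborel (density lborel (\<lambda>x. ennreal (f0 x)))"
      by (intro absolutely_continuousI_density) measurable
    have "A \<in> null_sets (density lborel f0)"
      using ac A unfolding absolutely_continuous_def by auto
    then have "emeasure (K N) A = 0" using K_le[of A N] A by (auto simp: null_sets_def)
    then show "A \<in> null_sets (K N)" using A by (auto simp: null_sets_def)
  qed
  define q where "q N = RN_deriv lborel (K N)" for N
  have qm[measurable]: "q N \<in> borel_measurable lborel" for N unfolding q_def by simp
  have Kq: "density lborel (q N) = K N" for N
    unfolding q_def by (rule sigma_finite_measure.density_RN_deriv[OF sigma_finite_lborel K_ac]) simp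
  have q_le: "AE x in lborel. q N x \<le> ennreal (f0 x)" for N
  proof (rule dens_le)
    show "(\<integral>\<^sup>+x. ennreal (f0 x) \<partial>lborel) \<noteq> \<infinity>" using nnf0 by simp
    fix A :: "(real^'d) set" assume "A \<in> sets lborel" then show "emeasure (density lborel (q N)) A \<le> emeasure (density lborel f0) A"
      unfolding Kq by (rule K_le)
  qed auto
  have q_mono: "AE x in lborel. q N x \<le> q N' x" if NN: "N \<le> N'" for N N'
  proof (rule dens_le)
    have "(\<integral>\<^sup>+x. q N' x \<partial>lborel) = emeasure (K N') (space lborel)"
      unfolding Kq[symmetric] by (simp add: emeasure_density)
    also have "\<dots> \<le> emeasure (density lborel f0) (space lborel)" by (rule K_le) simp
    also have "\<dots> = 1" using nnf0 by (simp add: emeasure_density)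
    finally show "(\<integral>\<^sup>+x. q N' x \<partial>lborel) \<noteq> \<infinity>" by (auto simp: top_unique)
    fix A :: "(real^'d) set" assume "A \<in> sets lborel" then show "emeasure (density lborel (q N)) A \<le> emeasure (density lborel (q N')) A"
      unfolding Kq by (rule K_mono[OF _ NN])
  qed auto
  define qr where "qr N x = min (enn2real (q N x)) (f0 x)" for N x
  have qrm[measurable]: "qr N \<in> borel_measurable lborel" for N unfolding qr_def by measurable
  have qr_nn: "0 \<le> qr N x" for N x unfolding qr_def using nn by simp
  have qr_le: "qr N x \<le> f0 x" for N x unfolding qr_def by simp
  have qr_q: "AE x in lborel. ennreal (qr N x) = q N x" for N
    using q_le[of N]
  proof eventually_elim
    fix x assume x: "q N x \<le> ennreal (f0 x)"
    have fin: "q N x < top" using le_less_trans[OF x ennreal_less_top] .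
    have "enn2real (q N x) \<le> enn2real (ennreal (f0 x))" using enn2real_mono[OF x ennreal_less_top] .
    then have "enn2real (q N x) \<le> f0 x" using nn[of x] by simp
    then have "qr N x = enn2real (q N x)" by (simp add: qr_def)
    then show "ennreal (qr N x) = q N x" using fin by simp
  qed
  have Kqr: "density lborel (\<lambda>x. ennreal (qr N x)) = K N" for N
    unfolding Kq[symmetric] by (rule density_cong) (auto simp: qr_q)
  have qr_mono: "AE x in lborel. qr N x \<le> qr N' x" if NN: "N \<le> N'" for N N'
    using q_mono[OF NN] q_le[of N']
  proof eventually_elim
    fix x assume x: "q N x \<le> q N' x" "q N' x \<le> ennreal (f0 x)"
    have fin: "q N' x < top" using le_less_trans[OF x(2) ennreal_less_top] .
    show "qr N x \<le> qr N' x" unfolding qr_def using enn2real_mono[OF x(1) fin] by simp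
  qed
  have int_qr: "has_bochner_integral lborel (qr N) (pE N)" for N
  proof (rule has_bochner_integral_nn_integral)
    have "(\<integral>\<^sup>+x. ennreal (qr N x) \<partial>lborel) = emeasure (K N) (space lborel)"
      unfolding Kqr[symmetric] by (simp add: emeasure_density)
    also have "\<dots> = emeasure M (E N)" by (subst eK) (auto intro!: arg_cong[where f="emeasure M"] simp: E_def)
    also have "\<dots> = ennreal (pE N)" by (simp add: pE_def M.emeasure_eq_measure)
    finally show "(\<integral>\<^sup>+x. ennreal (qr N x) \<partial>lborel) = ennreal (pE N)" .
  qed (auto simp: qr_nn pE_def)

  have Seq: "S = (\<lambda>\<omega>. \<Sum>j<m. a j *\<^sub>R X j \<omega>)" by (rule ext) (simp add: S_def)
  have E_nat_lim: "(\<lambda>n::nat. pE (real n)) \<longlonglongrightarrow> 1"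
  proof -
    have "(\<lambda>n. measure M (E (real n))) \<longlonglongrightarrow> measure M (\<Union>n. E (real n))"
      by (intro M.finite_Lim_measure_incseq) (auto simp: incseq_def intro!: E_mono)
    moreover have "(\<Union>n. E (real n)) = space M"
    proof
      show "(\<Union>n. E (real n)) \<subseteq> space M" by (auto simp: E_def)
      show "space M \<subseteq> (\<Union>n. E (real n))"
      proof
        fix \<omega> assume w: "\<omega> \<in> space M"
        define B where "B = (\<Sum>j<m. \<Sum>i\<in>UNIV. \<bar>X j \<omega> $ i\<bar>)"
        obtain n :: nat where n: "B \<le> real n" using real_arch_simple by blast
        have "X j \<omega> \<in> cube (real n)" if j: "j<m" for j
          unfolding cube_def
        proof (intro CollectI allI)
          fix i
          have "\<bar>X j \<omega> $ i\<bar> \<le> (\<Sum>i\<in>UNIV. \<bar>X j \<omega> $ i\<bar>)" by (rule member_le_sum) auto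
          also have "\<dots> \<le> B" unfolding B_def using j
            by (intro member_le_sum[of j "{..<m}" "\<lambda>j. \<Sum>i\<in>UNIV. \<bar>X j \<omega> $ i\<bar>"]) (auto intro: sum_nonneg)
          finally show "\<bar>X j \<omega> $ i\<bar> \<le> real n" using n by linarith
        qed
        then show "\<omega> \<in> (\<Union>n. E (real n))" using w by (auto simp: E_def)
      qed
    qed
    ultimately show ?thesis by (simp add: pE_def M.prob_space)
  qed
  have flo: "real (nat \<lfloor>N\<rfloor>) \<le> N" if "0 \<le> N" for N :: real
  proof -
    have "real (nat \<lfloor>N\<rfloor>) = real_of_int \<lfloor>N\<rfloor>" using that by simp
    then show ?thesis by simp
  qed
  have pE_lim: "(pE \<longlongrightarrow> 1) at_top"
  proof (rule tendsto_sandwich[of "\<lambda>N. pE (real (nat \<lfloor>N\<rfloor>))" _ _ "\<lambda>_. 1"])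
    show "eventually (\<lambda>N. pE (real (nat \<lfloor>N\<rfloor>)) \<le> pE N) at_top"
      using eventually_ge_at_top[of "0::real"]
      by eventually_elim (auto simp: pE_def intro!: M.finite_measure_mono E_mono flo)
    show "eventually (\<lambda>N. pE N \<le> 1) at_top" by (auto simp: pE_def)
    show "((\<lambda>N. pE (real (nat \<lfloor>N\<rfloor>))) \<longlongrightarrow> 1) at_top"
      using filterlim_compose[OF E_nat_lim filterlim_compose[OF filterlim_nat_sequentially filterlim_floor_sequentially]]
      by (simp add: o_def)
  qed simp
  have ev_half: "eventually (\<lambda>N. 1/2 < pE N) at_top"
    by (rule order_tendstoD(1)[OF pE_lim]) simp
  have ev_good: "eventually (\<lambda>N. 0 < N \<and> 1/2 < pE N) at_top"
    using eventually_gt_at_top[of "0::real"] ev_half by eventually_elim auto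
  define G where "G N x = (qr N x / pE N) * ln (qr N x / pE N)" for N x
  have ent: "prob_space.entropy (M' N) (exp 1) lborel (\<lambda>\<omega>. \<Sum>j<m. a j *\<^sub>R Y N j \<omega>) = - (\<integral>x. G N x \<partial>lborel)"
    if N: "0 < N" "1/2 < pE N" for N
  proof -
    have pj_pos: "\<forall>j<m. measure M {\<omega>\<in>space M. X j \<omega> \<in> cube N} > 0"
    proof (intro allI impI)
      fix j assume j: "j<m"
      have sj: "{\<omega>\<in>space M. X j \<omega> \<in> cube N} = X j -` cube N \<inter> space M" by auto
      have "pE N \<le> measure M {\<omega>\<in>space M. X j \<omega> \<in> cube N}" unfolding pE_def sj
        using j by (intro M.finite_measure_mono measurable_sets[OF rvX]) (auto simp: E_def)
      then show "0 < measure M {\<omega>\<in>space M. X j \<omega> \<in> cube N}" using N by linarith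
    qed
    from Ylaw N(1) pj_pos have PN: "prob_space (M' N)"
      and indY: "prob_space.indep_vars (M' N) (\<lambda>_. borel) (Y N) {..<m}"
      and lawY: "\<forall>j<m. \<forall>A\<in>sets borel.
           measure (M' N) {\<omega> \<in> space (M' N). Y N j \<omega> \<in> A} =
           measure M {\<omega> \<in> space M. X j \<omega> \<in> A \<inter> cube N}
             / measure M {\<omega> \<in> space M. X j \<omega> \<in> cube N}" by auto
    interpret M'N: prob_space "M' N" by (rule PN)
    interpret IMN: information_space "M' N" "exp 1"
      by (simp add: information_space_def information_space_axioms_def PN)
    have rvY[measurable]: "Y N j \<in> M' N \<rightarrow>\<^sub>M borel" if "j \<in> {..<m}" for j
      using indY that unfolding M'N.indep_vars_def by auto
    define SY where "SY \<omega> = (\<Sum>j<m. a j *\<^sub>R Y N j \<omega>)" for \<omega>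
    have SYm: "SY \<in> M' N \<rightarrow>\<^sub>M lborel" unfolding SY_def by simp
    have SYeq: "SY = (\<lambda>\<omega>. \<Sum>j<m. a j *\<^sub>R Y N j \<omega>)" by (rule ext) (simp add: SY_def)
    define pp where "pp = (\<Prod>j<m. measure M {\<omega> \<in> space M. X j \<omega> \<in> cube N})"
    define c where "c = ennreal (1 / pp)"
    have L: "distr (M' N) lborel SY = distr (density M (\<lambda>\<omega>. indicator (E N) \<omega> * c)) lborel S"
      using law_restrict[OF P PN m indep indY cube_borel pj_pos lawY, of a]
      unfolding SYeq Seq c_def pp_def E_def .
    have "1 = emeasure (distr (M' N) lborel SY) (space lborel)"
      using SYm by (simp add: emeasure_distr M'N.emeasure_space_1)
    also have "\<dots> = emeasure (density M (\<lambda>\<omega>. indicator (E N) \<omega> * c)) (S -` space lborel \<inter> space M)"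
      unfolding L by (simp add: emeasure_distr)
    also have "S -` space lborel \<inter> space M = space M" by auto
    also have "emeasure (density M (\<lambda>\<omega>. indicator (E N) \<omega> * c)) (space M) = (\<integral>\<^sup>+\<omega>. c * indicator (E N) \<omega> \<partial>M)"
      by (subst emeasure_density) (auto intro!: nn_integral_cong split: split_indicator)
    also have "\<dots> = c * emeasure M (E N)" by (simp add: nn_integral_cmult_indicator)
    also have "\<dots> = ennreal (pE N / pp)"
      unfolding c_def pE_def M.emeasure_eq_measure by (subst ennreal_mult[symmetric]) (auto simp: pp_def prod_nonneg)
    finally have e1: "ennreal (pE N / pp) = 1" by simp
    have "0 \<le> pE N / pp" by (simp add: pE_def pp_def prod_nonneg)
    then have "pE N / pp = 1" using e1 by simp
    then have pp_eq: "pp = pE N" by (cases "pp = 0") (auto simp: field_simps)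
    have Em: "indicator (E N) \<in> M \<rightarrow>\<^sub>M (borel :: ennreal measure)" by simp
    have "distr (density M (\<lambda>\<omega>. indicator (E N) \<omega> * c)) lborel S =
          distr (density (density M (indicator (E N))) (\<lambda>_. c)) lborel S"
      by (subst density_density_eq) auto
    also have "\<dots> = density (K N) (\<lambda>_. c)"
      unfolding K_def by (subst density_distr) auto
    also have "\<dots> = density (density lborel (\<lambda>x. ennreal (qr N x))) (\<lambda>_. c)" unfolding Kqr ..
    also have "\<dots> = density lborel (\<lambda>x. ennreal (qr N x) * c)"
      by (subst density_density_eq) auto
    also have "\<dots> = density lborel (\<lambda>x. ennreal (qr N x / pE N))"
    proof -
      have "ennreal (qr N x) * c = ennreal (qr N x / pE N)" for x
        unfolding c_def pp_eq using qr_nn[of N x] N by (subst ennreal_mult[symmetric]) auto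
      then show ?thesis by simp
    qed
    finally have L2: "distr (M' N) lborel SY = density lborel (\<lambda>x. ennreal (qr N x / pE N))"
      unfolding L .
    have D: "distributed (M' N) lborel SY (\<lambda>x. ennreal (qr N x / pE N))"
      unfolding distributed_def using L2 SYm by auto
    have "M'N.entropy (exp 1) lborel SY = - (\<integral>x. (qr N x / pE N) * log (exp 1) (qr N x / pE N) \<partial>lborel)"
      by (rule IMN.entropy_distr[OF D]) (use qr_nn N in auto)
    then show ?thesis unfolding SYeq G_def by (simp add: log_def)
  qed
  have mono_nat: "AE x in lborel. \<forall>n::nat. qr (real n) x \<le> qr (real (Suc n)) x"
    by (subst AE_all_countable) (auto intro!: qr_mono)
  define u where "u x = lim (\<lambda>n. qr (real n) x)" for x
  have um[measurable]: "u \<in> borel_measurable lborel" unfolding u_def by measurable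
  have u_lim: "AE x in lborel. (\<lambda>n. qr (real n) x) \<longlonglongrightarrow> u x"
    using mono_nat
  proof eventually_elim
    fix x assume "\<forall>n. qr (real n) x \<le> qr (real (Suc n)) x"
    then have inc: "incseq (\<lambda>n. qr (real n) x)" by (simp add: incseq_Suc_iff)
    have "bdd_above (range (\<lambda>n. qr (real n) x))" by (rule bdd_aboveI2[where M="f0 x"]) (rule qr_le)
    then have "convergent (\<lambda>n. qr (real n) x)"
      using LIMSEQ_incseq_SUP inc unfolding convergent_def by blast
    then show "(\<lambda>n. qr (real n) x) \<longlonglongrightarrow> u x" unfolding u_def by (simp add: convergent_LIMSEQ_iff)
  qed
  have u_le: "AE x in lborel. u x \<le> f0 x"
    using u_lim
  proof eventually_elim
    fix x assume "(\<lambda>n. qr (real n) x) \<longlonglongrightarrow> u x"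
    then show "u x \<le> f0 x" by (rule LIMSEQ_le_const2) (auto simp: qr_le)
  qed
  have bnd: "AE x in lborel. norm (qr (real n) x) \<le> f0 x" for n
    using qr_nn qr_le by auto
  have iu: "(\<lambda>n. \<integral>x. qr (real n) x \<partial>lborel) \<longlonglongrightarrow> (\<integral>x. u x \<partial>lborel)"
    by (rule integral_dominated_convergence[OF um _ int0 u_lim bnd]) simp
  have iu2: "integrable lborel u"
    by (rule integrable_dominated_convergence[OF um _ int0 u_lim bnd]) simp
  have "(\<lambda>n. \<integral>x. qr (real n) x \<partial>lborel) \<longlonglongrightarrow> 1"
    using E_nat_lim has_bochner_integral_integral_eq[OF int_qr] by simp
  then have intu: "(\<integral>x. u x \<partial>lborel) = 1" using iu LIMSEQ_unique by blast
  have "(\<integral>x. f0 x - u x \<partial>lborel) = 0" using intf0 intu int0 iu2 by simp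
  then have "AE x in lborel. f0 x - u x = 0"
    using u_le by (subst integral_nonneg_eq_0_iff_AE[symmetric]) (auto intro: int0 iu2)
  then have qr_lim: "AE x in lborel. (\<lambda>n. qr (real n) x) \<longlonglongrightarrow> f0 x"
    using u_lim by eventually_elim simp
  have intw: "integrable lborel (\<lambda>x. 2 * \<bar>f0 x * ln (f0 x)\<bar> + 4 * f0 x)"
    using intfl int0 by auto
  have mainlim: "((\<lambda>N. \<integral>x. G N x \<partial>lborel) \<longlongrightarrow> (\<integral>x. f0 x * ln (f0 x) \<partial>lborel)) at_top"
  proof (rule tendsto_at_topI_sequentially)
    fix Xs :: "nat \<Rightarrow> real" assume Xs: "filterlim Xs at_top sequentially"
    obtain N0 where N0: "\<And>N. N \<ge> N0 \<Longrightarrow> 0 < N \<and> 1/2 < pE N"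
      using ev_good by (auto simp: eventually_at_top_linorder)
    obtain K0 where K0: "\<And>k. k \<ge> K0 \<Longrightarrow> Xs k \<ge> N0"
      using filterlim_at_top[THEN iffD1, OF Xs, rule_format, of N0] by (auto simp: eventually_sequentially)
    define Z where "Z k = Xs (k + K0)" for k
    have Zgood: "0 < Z k" "1/2 < pE (Z k)" for k using N0 K0[of "k+K0"] by (auto simp: Z_def)
    have Zlim: "filterlim Z at_top sequentially" unfolding Z_def
      using filterlim_compose[OF Xs filterlim_add_const_nat_at_top] by (simp add: o_def)
    have pZ: "(\<lambda>k. pE (Z k)) \<longlonglongrightarrow> 1" using filterlim_compose[OF pE_lim Zlim] by (simp add: o_def)
    have fl: "filterlim (\<lambda>k. nat \<lfloor>Z k\<rfloor>) sequentially sequentially"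
      using filterlim_compose[OF filterlim_nat_sequentially filterlim_compose[OF filterlim_floor_sequentially Zlim]]
      by (simp add: o_def)
    have AEcmp: "AE x in lborel. \<forall>k. qr (real (nat \<lfloor>Z k\<rfloor>)) x \<le> qr (Z k) x"
      by (subst AE_all_countable) (auto intro!: qr_mono flo less_imp_le[OF Zgood(1)])
    have "(\<lambda>k. \<integral>x. G (Z k) x \<partial>lborel) \<longlonglongrightarrow> (\<integral>x. f0 x * ln (f0 x) \<partial>lborel)"
    proof (rule integral_dominated_convergence[OF _ _ intw])
      show "(\<lambda>x. f0 x * ln (f0 x)) \<in> borel_measurable lborel" by measurable
      show "G (Z k) \<in> borel_measurable lborel" for k unfolding G_def by measurable
      show "AE x in lborel. norm (G (Z k) x) \<le> 2 * \<bar>f0 x * ln (f0 x)\<bar> + 4 * f0 x" for k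
      proof (rule AE_I2)
        fix x
        have p: "1/2 < pE (Z k)" by (rule Zgood)
        have "qr (Z k) x / pE (Z k) \<le> 2 * f0 x"
        proof -
          have "qr (Z k) x \<le> f0 x" by (rule qr_le)
          also have "f0 x \<le> 2 * f0 x * pE (Z k)"
          proof -
            have "f0 x * 1 \<le> f0 x * (2 * pE (Z k))" by (rule mult_left_mono) (use p nn[of x] in auto)
            then show ?thesis by (simp add: algebra_simps)
          qed
          finally show ?thesis using p by (simp add: divide_le_eq)
        qed
        moreover have "0 \<le> qr (Z k) x / pE (Z k)" using qr_nn p by simp
        ultimately show "norm (G (Z k) x) \<le> 2 * \<bar>f0 x * ln (f0 x)\<bar> + 4 * f0 x"
          unfolding G_def real_norm_def by (intro tlnt_bound)
      qed
      show "AE x in lborel. (\<lambda>k. G (Z k) x) \<longlonglongrightarrow> f0 x * ln (f0 x)"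
        using AEcmp qr_lim
      proof eventually_elim
        fix x assume c: "\<forall>k. qr (real (nat \<lfloor>Z k\<rfloor>)) x \<le> qr (Z k) x"
          and l: "(\<lambda>n. qr (real n) x) \<longlonglongrightarrow> f0 x"
        have l1: "(\<lambda>k. qr (real (nat \<lfloor>Z k\<rfloor>)) x) \<longlonglongrightarrow> f0 x"
          using filterlim_compose[OF l fl] by (simp add: o_def)
        have l2: "(\<lambda>k. qr (Z k) x) \<longlonglongrightarrow> f0 x"
          by (rule tendsto_sandwich[OF _ _ l1 tendsto_const]) (auto simp: c qr_le)
        have l3: "(\<lambda>k. qr (Z k) x / pE (Z k)) \<longlonglongrightarrow> f0 x"
          using tendsto_divide[OF l2 pZ] by simp
        show "(\<lambda>k. G (Z k) x) \<longlonglongrightarrow> f0 x * ln (f0 x)"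
        proof (cases "f0 x = 0")
          case True
          then have "qr (Z k) x = 0" for k using qr_nn[of "Z k" x] qr_le[of "Z k" x] by simp
          then show ?thesis using True by (simp add: G_def)
        next
          case False
          show ?thesis unfolding G_def by (intro tendsto_mult l3 tendsto_ln False)
        qed
      qed
    qed
    then show "(\<lambda>k. \<integral>x. G (Xs k) x \<partial>lborel) \<longlonglongrightarrow> (\<integral>x. f0 x * ln (f0 x) \<partial>lborel)"
      unfolding Z_def by (rule LIMSEQ_offset)
  qed
  have ev_eq: "eventually (\<lambda>N. - (\<integral>x. G N x \<partial>lborel) =
      prob_space.entropy (M' N) (exp 1) lborel (\<lambda>\<omega>. \<Sum>j<m. a j *\<^sub>R Y N j \<omega>)) at_top"
    using ev_good by eventually_elim (simp add: ent)
  have "((\<lambda>N. - (\<integral>x. G N x \<partial>lborel)) \<longlongrightarrow> - (\<integral>x. f0 x * ln (f0 x) \<partial>lborel)) at_top"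
    by (intro tendsto_minus mainlim)
  then have "((\<lambda>N. prob_space.entropy (M' N) (exp 1) lborel (\<lambda>\<omega>. \<Sum>j<m. a j *\<^sub>R Y N j \<omega>))
      \<longlongrightarrow> - (\<integral>x. f0 x * ln (f0 x) \<partial>lborel)) at_top"
    using tendsto_cong[OF ev_eq] by simp
  then show ?thesis using H unfolding Seq by simp
qed

end
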